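(* Let $\{S(t)\}_{t\ge0}$ be a dissipative semigroup on a complete metric space $(X,d)$ and let $\mathcal{B}_0$ be a positively invariant bounded absorbing set. Assume there exist constants $T>0$, $\delta_0>0$, $\eta\in[0,1)$, a function $g:(\mathbb{R}^+)^m\to\mathbb{R}^+$ and pseudometrics $\varrho_1,\dots,\varrho_m$ on $\mathcal{B}_0$ such that: (i) $g$ is non-decreasing in each variable, $g(0,\dots,0)=0$, and $g$ is continuous at $(0,\dots,0)$; (ii) each $\varrho_i$ is precompact on $\mathcal{B}_0$, i.e. every sequence in $\mathcal{B}_0$ has a subsequence which is Cauchy with respect to $\varrho_i$; (iii) the inequality $$d(S(T)y_1,S(T)y_2)\le\eta\, d(y_1,y_2)+g\big(\varrho_1(y_1,y_2),\dots,\varrho_m(y_1,y_2)\big)$$ holds for all $y_1,y_2\in\mathcal{B}_0$ with $\varrho_i(y_1,y_2)\le\delta_0$ for $i=1,\dots,m$. Then $(X,\{S(t)\}_{t\ge0})$ is exponentially decaying with respect to the noncompactness measure, and for every bounded $B\subseteq X$, $$\alpha(S(t)B)\le\eta^{\frac{t-t_*(B)-T}{T}}\alpha(\mathcal{B}_0)\quad\forall t\ge t_*(B)+T,$$ where $t_*(B)$ satisfies $S(t)B\subseteq\mathcal{B}_0$ for all $t\ge t_*(B)$.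
   Context: A semigroup consists of continuous maps $S(t):X\to X$ with $S(0)=I$, $S(t+s)=S(t)S(s)$; it is dissipative if it has a bounded absorbing set (a closed set $\mathcal{B}$ such that every bounded $B$ satisfies $S(t)B\subseteq\mathcal{B}$ for all large $t$); positively invariant means $S(t)\mathcal{B}_0\subseteq\mathcal{B}_0$ for $t\ge0$. $\alpha$ is the Kuratowski measure of noncompactness, $\alpha(B)=\inf\{\delta>0:B\text{ has a finite cover by sets of diameter}<\delta\}$. The system is exponentially decaying with respect to the noncompactness measure if it is dissipative and there are $t_0>0$ and constants $C,\beta>0$ with $\alpha(S(t)\mathcal{B}_0)\le Ce^{-\beta t}$ for all $t\ge t_0$, for a positively invariant bounded absorbing set $\mathcal{B}_0$. *)

theory Defs
  imports "HOL-Analysis.Analysis"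
begin

definition semigroup :: "(real \<Rightarrow> 'a::metric_space \<Rightarrow> 'a) \<Rightarrow> bool" where
  "semigroup S \<longleftrightarrow>
     (\<forall>t\<ge>0. continuous_on UNIV (S t)) \<and> S 0 = id \<and>
     (\<forall>t\<ge>0. \<forall>s\<ge>0. S (t + s) = S t \<circ> S s)"

definition absorbing_set :: "(real \<Rightarrow> 'a::metric_space \<Rightarrow> 'a) \<Rightarrow> 'a set \<Rightarrow> bool" where
  "absorbing_set S B0 \<longleftrightarrow> closed B0 \<and> bounded B0 \<and>
     (\<forall>B. bounded B \<longrightarrow> (\<exists>t0. \<forall>t\<ge>t0. S t ` B \<subseteq> B0))"

definition dissipative :: "(real \<Rightarrow> 'a::metric_space \<Rightarrow> 'a) \<Rightarrow> bool" where
  "dissipative S \<longleftrightarrow> semigroup S \<and> (\<exists>B0. absorbing_set S B0)"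

definition positively_invariant :: "(real \<Rightarrow> 'a \<Rightarrow> 'a) \<Rightarrow> 'a set \<Rightarrow> bool" where
  "positively_invariant S B0 \<longleftrightarrow> (\<forall>t\<ge>0. S t ` B0 \<subseteq> B0)"

definition kuratowski :: "'a::metric_space set \<Rightarrow> real" where
  "kuratowski B = Inf {\<delta>. \<delta> > 0 \<and> (\<exists>F. finite F \<and> B \<subseteq> \<Union>F \<and>
        (\<forall>A\<in>F. bounded A \<and> diameter A < \<delta>))}"

definition exp_decaying :: "(real \<Rightarrow> 'a::metric_space \<Rightarrow> 'a) \<Rightarrow> 'a set \<Rightarrow> bool" where
  "exp_decaying S B0 \<longleftrightarrow> dissipative S \<and> absorbing_set S B0 \<and> positively_invariant S B0 \<and>
     (\<exists>t0>0. \<exists>C>0. \<exists>\<beta>>0. \<forall>t\<ge>t0. kuratowski (S t ` B0) \<le> C * exp (- \<beta> * t))"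

definition pseudometric_on :: "'a set \<Rightarrow> ('a \<Rightarrow> 'a \<Rightarrow> real) \<Rightarrow> bool" where
  "pseudometric_on B r \<longleftrightarrow>
     (\<forall>x\<in>B. \<forall>y\<in>B. r x y \<ge> 0 \<and> r x y = r y x) \<and> (\<forall>x\<in>B. r x x = 0) \<and>
     (\<forall>x\<in>B. \<forall>y\<in>B. \<forall>z\<in>B. r x z \<le> r x y + r y z)"

definition precompact_on :: "'a set \<Rightarrow> ('a \<Rightarrow> 'a \<Rightarrow> real) \<Rightarrow> bool" where
  "precompact_on B r \<longleftrightarrow>
     (\<forall>s. range s \<subseteq> B \<longrightarrow> (\<exists>h::nat\<Rightarrow>nat. strict_mono h \<and>
        (\<forall>\<epsilon>>0. \<exists>N. \<forall>m\<ge>N. \<forall>n\<ge>N. r (s (h m)) (s (h n)) < \<epsilon>)))"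

text \<open>Real power with the convention b^0 = 1 (also for b = 0).\<close>
definition rpow :: "real \<Rightarrow> real \<Rightarrow> real" where
  "rpow b x = (if x = 0 then 1 else b powr x)"

end

theory Submission
  imports Defs
begin

definition covers :: "'a::metric_space set \<Rightarrow> real \<Rightarrow> bool" where
  "covers B d \<longleftrightarrow> (\<exists>F. finite F \<and> B \<subseteq> \<Union>F \<and> (\<forall>A\<in>F. bounded A \<and> diameter A < d))"

lemma kur_eq: "kuratowski B = Inf {d. d > 0 \<and> covers B d}"
  unfolding kuratowski_def covers_def by simp

lemma diameter_le_metric:
  fixes S :: "'a::metric_space set"
  assumes "S \<noteq> {} \<or> 0 \<le> d" "\<And>x y. x \<in> S \<Longrightarrow> y \<in> S \<Longrightarrow> dist x y \<le> d"
  shows "diameter S \<le> d"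
  using assms by (auto simp: diameter_def intro: cSUP_least)

lemma covers_bounded:
  assumes "bounded B" shows "covers B (diameter B + 1)"
  unfolding covers_def using assms by (intro exI[of _ "{B}"]) auto

lemma covers_mono: "covers B d \<Longrightarrow> d \<le> d' \<Longrightarrow> covers B d'"
  unfolding covers_def by fastforce

lemma kur_set_ne:
  assumes "bounded B" shows "{d. d > 0 \<and> covers B d} \<noteq> {}"
proof -
  have "diameter B + 1 > 0" using diameter_ge_0[OF assms] by linarith
  then show ?thesis using covers_bounded[OF assms] by blast
qed

lemma kur_nonneg:
  assumes "bounded B" shows "0 \<le> kuratowski B"
  unfolding kur_eq using kur_set_ne[OF assms] by (intro cInf_greatest) auto

lemma kur_mono:
  assumes "A \<subseteq> B" "bounded B" shows "kuratowski A \<le> kuratowski B"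
  unfolding kur_eq
proof (rule cInf_superset_mono)
  show "{d. d > 0 \<and> covers B d} \<noteq> {}" using kur_set_ne[OF assms(2)] .
  show "bdd_below {d. d > 0 \<and> covers A d}" by (rule bdd_belowI[of _ 0]) auto
  show "{d. d > 0 \<and> covers B d} \<subseteq> {d. d > 0 \<and> covers A d}"
    using assms(1) unfolding covers_def by blast
qed

lemma kur_le:
  assumes "bounded B" "0 \<le> c" "\<And>e. e > 0 \<Longrightarrow> covers B (c + e)"
  shows "kuratowski B \<le> c"
proof (rule field_le_epsilon)
  fix e :: real assume e: "e > 0"
  have "c + e \<in> {d. d > 0 \<and> covers B d}" using assms e by auto
  then show "kuratowski B \<le> c + e" unfolding kur_eq
    by (intro cInf_lower) (auto intro: bdd_belowI[of _ 0])
qed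

lemma kur_covers:
  assumes "bounded B" "e > 0" shows "covers B (kuratowski B + e)"
proof -
  have "Inf {d. d > 0 \<and> covers B d} < kuratowski B + e" using assms(2) unfolding kur_eq by simp
  then obtain d where "d \<in> {d. d > 0 \<and> covers B d}" "d < kuratowski B + e"
    using cInf_lessD[OF kur_set_ne[OF assms(1)]] by blast
  then show ?thesis using covers_mono[of B d "kuratowski B + e"] by auto
qed

lemma precompact_totally_bounded:
  assumes pc: "precompact_on B0 r" and d: "d > 0"
  shows "\<exists>C. finite C \<and> C \<subseteq> B0 \<and> (\<forall>x\<in>B0. \<exists>c\<in>C. r x c < d)"
proof (rule ccontr)
  assume H: "\<not> ?thesis"
  have Hx: "\<exists>x. x \<in> B0 \<and> (\<forall>c\<in>C. \<not> r x c < d)" if "finite C" "C \<subseteq> B0" for C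
  proof (rule ccontr)
    assume "\<not> (\<exists>x. x \<in> B0 \<and> (\<forall>c\<in>C. \<not> r x c < d))"
    then have "\<forall>x\<in>B0. \<exists>c\<in>C. r x c < d" by auto
    moreover have "\<forall>C\<subseteq>B0. finite C \<longrightarrow> (\<exists>x\<in>B0. \<forall>c\<in>C. \<not> r x c < d)" using H by auto
    ultimately have A1: "\<forall>x\<in>B0. \<exists>c\<in>C. r x c < d" and A2: "\<exists>x\<in>B0. \<forall>c\<in>C. \<not> r x c < d"
      using that by simp_all
    from A2 obtain x where "x \<in> B0" "\<forall>c\<in>C. \<not> r x c < d" by blast
    with A1 show False by blast
  qed
  define pick where "pick C = (SOME x. x \<in> B0 \<and> (\<forall>c\<in>C. \<not> r x c < d))" for C
  define Cs where "Cs = rec_nat {} (\<lambda>n C. insert (pick C) C)"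
  have Cs0: "Cs 0 = {}" and CsS: "\<And>n. Cs (Suc n) = insert (pick (Cs n)) (Cs n)"
    unfolding Cs_def by simp_all
  have P: "finite (Cs n) \<and> Cs n \<subseteq> B0 \<and> pick (Cs n) \<in> B0 \<and> (\<forall>c\<in>Cs n. \<not> r (pick (Cs n)) c < d)" for n
  proof (induction n)
    case 0
    have "\<exists>x. x \<in> B0 \<and> (\<forall>c\<in>Cs 0. \<not> r x c < d)" using Hx[of "{}"] Cs0 by simp
    then have "pick (Cs 0) \<in> B0 \<and> (\<forall>c\<in>Cs 0. \<not> r (pick (Cs 0)) c < d)"
      unfolding pick_def by (rule someI_ex)
    then show ?case using Cs0 by simp
  next
    case (Suc n)
    have fin: "finite (Cs (Suc n))" "Cs (Suc n) \<subseteq> B0" using Suc CsS[of n] by auto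
    then have "\<exists>x. x \<in> B0 \<and> (\<forall>c\<in>Cs (Suc n). \<not> r x c < d)" using Hx by blast
    then have "pick (Cs (Suc n)) \<in> B0 \<and> (\<forall>c\<in>Cs (Suc n). \<not> r (pick (Cs (Suc n))) c < d)"
      unfolding pick_def by (rule someI_ex)
    then show ?case using fin by simp
  qed
  define s where "s n = pick (Cs n)" for n
  have mono: "m < n \<Longrightarrow> s m \<in> Cs n" for m n
  proof (induction n)
    case 0 then show ?case by simp
  next
    case (Suc n)
    then have "m = n \<or> m < n" by linarith
    then show ?case using Suc CsS[of n] unfolding s_def by auto
  qed
  have sep: "m < n \<Longrightarrow> \<not> r (s n) (s m) < d" for m n
  proof -
    assume "m < n"
    then have "s m \<in> Cs n" by (rule mono)
    moreover have "\<forall>c\<in>Cs n. \<not> r (s n) c < d" using P[of n] unfolding s_def by blast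
    ultimately show ?thesis by blast
  qed
  have "range s \<subseteq> B0" using P unfolding s_def by auto
  then obtain h :: "nat \<Rightarrow> nat" where h: "strict_mono h"
    and cau: "\<forall>\<epsilon>>0. \<exists>N. \<forall>m\<ge>N. \<forall>n\<ge>N. r (s (h m)) (s (h n)) < \<epsilon>"
    using pc unfolding precompact_on_def by blast
  obtain N where "\<forall>m\<ge>N. \<forall>n\<ge>N. r (s (h m)) (s (h n)) < d" using cau d by blast
  then have "r (s (h (Suc N))) (s (h N)) < d" by auto
  moreover have "h N < h (Suc N)" using h by (simp add: strict_mono_def)
  ultimately show False using sep by blast
qed

lemma g_vec_mono:
  fixes g :: "real^'m \<Rightarrow> real"
  assumes g_mono: "\<And>i x y. (\<forall>j. 0 \<le> x $ j) \<Longrightarrow> (\<forall>j. j \<noteq> i \<longrightarrow> y $ j = x $ j) \<Longrightarrow>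
                   x $ i \<le> y $ i \<Longrightarrow> g x \<le> g y"
    and x0: "\<forall>j. 0 \<le> x $ j" and xy: "\<forall>j. x $ j \<le> y $ j"
  shows "g x \<le> g y"
proof -
  define z where "z I = (\<chi> j. if j \<in> I then y $ j else x $ j)" for I
  have "g x \<le> g (z I)" if "finite I" for I
    using that
  proof (induction I rule: finite_induct)
    case empty
    have "z {} = x" unfolding z_def by (simp add: vec_eq_iff)
    then show ?case by simp
  next
    case (insert a I)
    have "g (z I) \<le> g (z (insert a I))"
    proof (rule g_mono[of "z I" a])
      show "\<forall>j. 0 \<le> z I $ j"
      proof
        fix j
        have "0 \<le> x $ j" "x $ j \<le> y $ j" using x0 xy by auto
        then show "0 \<le> z I $ j" unfolding z_def by simp
      qed
      show "\<forall>j. j \<noteq> a \<longrightarrow> z (insert a I) $ j = z I $ j" unfolding z_def by auto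
      show "z I $ a \<le> z (insert a I) $ a" unfolding z_def using insert(2) xy by auto
    qed
    then show ?case using insert(3) by linarith
  qed
  moreover have "z UNIV = y" unfolding z_def by (simp add: vec_eq_iff)
  ultimately show ?thesis by (metis finite)
qed

lemma g_small:
  fixes g :: "real^'m \<Rightarrow> real"
  assumes g_zero: "g 0 = 0"
    and g_cont: "continuous (at 0 within {x. \<forall>j. 0 \<le> x $ j}) g"
    and e: "e > 0" and d0: "d0 > 0"
  shows "\<exists>d>0. d \<le> d0 \<and> g (\<chi> i. d) < e"
proof -
  obtain r where r: "r > 0" and H: "\<forall>x'\<in>{x. \<forall>j. 0 \<le> x $ j}. dist x' 0 < r \<longrightarrow> dist (g x') (g 0) < e"
    using g_cont e unfolding continuous_within_eps_delta by blast
  define d where "d = min d0 (r / (2 * (real CARD('m) + 1)))"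
  have dpos: "d > 0" unfolding d_def using d0 r by auto
  have "norm (\<chi> i::'m. d) \<le> (\<Sum>i\<in>UNIV. \<bar>(\<chi> i::'m. d) $ i\<bar>)" by (rule norm_le_l1_cart)
  also have "\<dots> = real CARD('m) * d" using dpos by simp
  also have "\<dots> \<le> real CARD('m) * (r / (2 * (real CARD('m) + 1)))"
    unfolding d_def by (intro mult_left_mono) auto
  also have "\<dots> < r"
  proof -
    have "real CARD('m) * (r / (2 * (real CARD('m) + 1))) = r * (real CARD('m) / (2 * (real CARD('m) + 1)))"
      by simp
    also have "\<dots> < r * 1" using r by (intro mult_strict_left_mono) (auto simp: field_simps)
    finally show ?thesis by simp
  qed
  finally have "dist (\<chi> i::'m. d) 0 < r" by (simp add: dist_norm)
  moreover have "(\<chi> i::'m. d) \<in> {x. \<forall>j. 0 \<le> x $ j}" using dpos by simp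
  ultimately have "dist (g (\<chi> i. d)) (g 0) < e" using H by blast
  then have "g (\<chi> i. d) < e" using g_zero by (simp add: dist_real_def)
  moreover have "d \<le> d0" unfolding d_def by simp
  ultimately show ?thesis using dpos by blast
qed

theorem theorem4p5:
  fixes S :: "real \<Rightarrow> 'a::complete_space \<Rightarrow> 'a"
    and B0 :: "'a set"
    and T \<delta>0 \<eta> :: real
    and g :: "real^'m \<Rightarrow> real"
    and \<rho> :: "'m \<Rightarrow> 'a \<Rightarrow> 'a \<Rightarrow> real"
  assumes diss: "dissipative S"
    and B0_abs: "absorbing_set S B0"
    and B0_inv: "positively_invariant S B0"
    and T_pos: "T > 0" and \<delta>0_pos: "\<delta>0 > 0"
    and \<eta>_range: "0 \<le> \<eta>" "\<eta> < 1"
    and g_nonneg: "\<And>x. (\<forall>j. 0 \<le> x $ j) \<Longrightarrow> 0 \<le> g x"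
    and g_mono: "\<And>i x y. (\<forall>j. 0 \<le> x $ j) \<Longrightarrow> (\<forall>j. j \<noteq> i \<longrightarrow> y $ j = x $ j) \<Longrightarrow>
                   x $ i \<le> y $ i \<Longrightarrow> g x \<le> g y"
    and g_zero: "g 0 = 0"
    and g_cont: "continuous (at 0 within {x. \<forall>j. 0 \<le> x $ j}) g"
    and \<rho>_pm: "\<And>i. pseudometric_on B0 (\<rho> i)"
    and \<rho>_pc: "\<And>i. precompact_on B0 (\<rho> i)"
    and contr: "\<And>y1 y2. y1 \<in> B0 \<Longrightarrow> y2 \<in> B0 \<Longrightarrow> (\<forall>i. \<rho> i y1 y2 \<le> \<delta>0) \<Longrightarrow>
          dist (S T y1) (S T y2) \<le> \<eta> * dist y1 y2 + g (\<chi> i. \<rho> i y1 y2)"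
  shows "exp_decaying S B0 \<and>
         (\<forall>B tstar. bounded B \<longrightarrow> tstar \<ge> 0 \<longrightarrow> (\<forall>t\<ge>tstar. S t ` B \<subseteq> B0) \<longrightarrow>
            (\<forall>t\<ge>tstar + T. kuratowski (S t ` B) \<le> rpow \<eta> ((t - tstar - T) / T) * kuratowski B0))"
proof -
  have sg: "semigroup S" using diss unfolding dissipative_def by blast
  have S0: "S 0 = id" and Sadd: "\<And>t s. t \<ge> 0 \<Longrightarrow> s \<ge> 0 \<Longrightarrow> S (t + s) = S t \<circ> S s"
    using sg unfolding semigroup_def by auto
  have bB0: "bounded B0" using B0_abs unfolding absorbing_set_def by blast
  have inv: "\<And>t. t \<ge> 0 \<Longrightarrow> S t ` B0 \<subseteq> B0" using B0_inv unfolding positively_invariant_def by blast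
  have step: "kuratowski (S T ` A) \<le> \<eta> * kuratowski A" if AB: "A \<subseteq> B0" for A
  proof -
    have bA: "bounded A" using AB bB0 bounded_subset by blast
    have STB: "S T ` A \<subseteq> B0" using inv[of T] T_pos AB by auto
    have bSA: "bounded (S T ` A)" using STB bB0 bounded_subset by blast
    have kA0: "0 \<le> kuratowski A" using kur_nonneg[OF bA] .
    show ?thesis
    proof (rule kur_le[OF bSA])
      show "0 \<le> \<eta> * kuratowski A" using kA0 \<eta>_range by simp
      fix e :: real assume e: "e > 0"
      obtain \<delta> where \<delta>: "\<delta> > 0" "\<delta> \<le> \<delta>0" "g (\<chi> i. \<delta>) < e / 2"
        using g_small[OF g_zero g_cont, of "e/2" \<delta>0] e \<delta>0_pos by auto
      obtain F where F: "finite F" "A \<subseteq> \<Union>F" "\<And>A'. A' \<in> F \<Longrightarrow> bounded A' \<and> diameter A' < kuratowski A + e / 2"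
        using kur_covers[OF bA, of "e/2"] e unfolding covers_def by auto
      have "\<forall>i. \<exists>C. finite C \<and> C \<subseteq> B0 \<and> (\<forall>x\<in>B0. \<exists>c\<in>C. \<rho> i x c < \<delta> / 2)"
        using precompact_totally_bounded[OF \<rho>_pc, of "\<delta>/2"] \<delta>(1) by auto
      then obtain C where C: "\<And>i. finite (C i)" "\<And>i. C i \<subseteq> B0"
        "\<And>i x. x \<in> B0 \<Longrightarrow> \<exists>c\<in>C i. \<rho> i x c < \<delta> / 2"
        by metis
      define P where "P i = (\<lambda>c. {x\<in>B0. \<rho> i x c < \<delta> / 2}) ` C i" for i
      define cell where "cell p = fst p \<inter> B0 \<inter> (\<Inter>i. snd p i)" for p :: "'a set \<times> ('m \<Rightarrow> 'a set)"
      define G where "G = (\<lambda>p. S T ` cell p) ` (F \<times> PiE UNIV P)"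
      show "covers (S T ` A) (\<eta> * kuratowski A + e)"
        unfolding covers_def
      proof (intro exI[of _ G] conjI ballI)
        have "finite (PiE UNIV P)" unfolding P_def using C(1) by (intro finite_PiE) auto
        then show "finite G" unfolding G_def using F(1) by auto
      next
        show "S T ` A \<subseteq> \<Union>G"
        proof
          fix z assume "z \<in> S T ` A"
          then obtain y where y: "y \<in> A" "z = S T y" by blast
          then obtain A' where A': "A' \<in> F" "y \<in> A'" using F(2) by blast
          have yB: "y \<in> B0" using y AB by blast
          have "\<forall>i. \<exists>c. c \<in> C i \<and> \<rho> i y c < \<delta> / 2" using C(3)[OF yB] by blast
          then obtain cc where cc: "\<And>i. cc i \<in> C i" "\<And>i. \<rho> i y (cc i) < \<delta> / 2" by metis
          define f where "f i = {x\<in>B0. \<rho> i x (cc i) < \<delta> / 2}" for i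
          have fP: "f \<in> PiE UNIV P" unfolding f_def P_def using cc(1) by (auto simp: PiE_iff)
          have "y \<in> cell (A', f)" unfolding cell_def f_def using A' yB cc(2) by auto
          then have "z \<in> S T ` cell (A', f)" using y by blast
          moreover have "S T ` cell (A', f) \<in> G" unfolding G_def using A' fP by blast
          ultimately show "z \<in> \<Union>G" by blast
        qed
      next
        fix X assume "X \<in> G"
        then obtain A' f where A'f: "A' \<in> F" "f \<in> PiE UNIV P" "X = S T ` cell (A', f)"
          unfolding G_def by auto
        have cB: "cell (A', f) \<subseteq> B0" unfolding cell_def by auto
        then have "X \<subseteq> B0" using A'f(3) inv[of T] T_pos by auto
        then show bX: "bounded X" using bB0 bounded_subset by blast
        have bA': "bounded A'" and dA': "diameter A' < kuratowski A + e / 2" using F(3)[OF A'f(1)] by auto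
        have g0: "0 \<le> g (\<chi> i. \<delta>)" using g_nonneg \<delta>(1) by simp
        have "diameter X \<le> \<eta> * diameter A' + g (\<chi> i. \<delta>)"
        proof (rule diameter_le_metric)
          show "X \<noteq> {} \<or> 0 \<le> \<eta> * diameter A' + g (\<chi> i. \<delta>)"
            using diameter_ge_0[OF bA'] \<eta>_range g0 by simp
          fix z1 z2 assume "z1 \<in> X" "z2 \<in> X"
          then obtain x1 x2 where x: "x1 \<in> cell (A', f)" "x2 \<in> cell (A', f)" "z1 = S T x1" "z2 = S T x2"
            using A'f(3) by blast
          have xB: "x1 \<in> B0" "x2 \<in> B0" "x1 \<in> A'" "x2 \<in> A'" using x(1,2) unfolding cell_def by auto
          have rle: "\<rho> i x1 x2 \<le> \<delta>" for i
          proof -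
            have "f i \<in> P i" using A'f(2) by (auto simp: PiE_iff)
            then obtain c where c: "c \<in> C i" "f i = {x\<in>B0. \<rho> i x c < \<delta> / 2}" unfolding P_def by blast
            have cB0: "c \<in> B0" using c(1) C(2) by blast
            have "x1 \<in> f i" "x2 \<in> f i" using x(1,2) unfolding cell_def by auto
            then have "\<rho> i x1 c < \<delta> / 2" "\<rho> i x2 c < \<delta> / 2" using c(2) by auto
            moreover have "\<rho> i x1 x2 \<le> \<rho> i x1 c + \<rho> i c x2" "\<rho> i c x2 = \<rho> i x2 c"
              using \<rho>_pm[of i] xB cB0 unfolding pseudometric_on_def by blast+
            ultimately show ?thesis by linarith
          qed
          have "dist z1 z2 \<le> \<eta> * dist x1 x2 + g (\<chi> i. \<rho> i x1 x2)"
            using contr[OF xB(1,2)] rle \<delta>(2) x(3,4) order_trans by blast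
          also have "\<dots> \<le> \<eta> * diameter A' + g (\<chi> i. \<delta>)"
          proof (rule add_mono)
            show "\<eta> * dist x1 x2 \<le> \<eta> * diameter A'"
              using diameter_bounded_bound[OF bA' xB(3,4)] \<eta>_range by (intro mult_left_mono) auto
            show "g (\<chi> i. \<rho> i x1 x2) \<le> g (\<chi> i. \<delta>)"
            proof (rule g_vec_mono[where g = g])
              show "\<forall>j. 0 \<le> (\<chi> i. \<rho> i x1 x2) $ j" using \<rho>_pm xB unfolding pseudometric_on_def by simp
              show "\<forall>j. (\<chi> i. \<rho> i x1 x2) $ j \<le> (\<chi> i. \<delta>) $ j" using rle by simp
            qed (rule g_mono)
          qed
          finally show "dist z1 z2 \<le> \<eta> * diameter A' + g (\<chi> i. \<delta>)" .
        qed
        also have "\<dots> < \<eta> * kuratowski A + e"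
        proof -
          have "\<eta> * diameter A' \<le> \<eta> * (kuratowski A + e / 2)"
            using dA' \<eta>_range by (intro mult_left_mono) auto
          also have "\<dots> \<le> \<eta> * kuratowski A + e / 2" using \<eta>_range e by (simp add: algebra_simps)
          finally show ?thesis using \<delta>(3) by linarith
        qed
        finally show "diameter X < \<eta> * kuratowski A + e" .
      qed
    qed
  qed
  have iter: "kuratowski (S (real k * T) ` A) \<le> \<eta> ^ k * kuratowski A" if AB: "A \<subseteq> B0" for k A
  proof (induction k)
    case 0
    show ?case using S0 by simp
  next
    case (Suc k)
    have kT: "real k * T \<ge> 0" using T_pos by simp
    have eq: "S (real (Suc k) * T) = S T \<circ> S (real k * T)"
      using Sadd[of T "real k * T"] T_pos kT by (simp add: algebra_simps)
    have XB: "S (real k * T) ` A \<subseteq> B0" using inv[OF kT] AB by auto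
    have "kuratowski (S (real (Suc k) * T) ` A) = kuratowski (S T ` (S (real k * T) ` A))"
      by (simp only: eq image_comp)
    also have "\<dots> \<le> \<eta> * kuratowski (S (real k * T) ` A)" using step[OF XB] .
    also have "\<dots> \<le> \<eta> * (\<eta> ^ k * kuratowski A)" using Suc \<eta>_range by (intro mult_left_mono) auto
    finally show ?case by simp
  qed
  have kB0: "0 \<le> kuratowski B0" using kur_nonneg[OF bB0] .
  have main: "kuratowski (S t ` B) \<le> rpow \<eta> ((t - tstar - T) / T) * kuratowski B0"
    if B: "bounded B" "tstar \<ge> 0" "\<forall>t\<ge>tstar. S t ` B \<subseteq> B0" and t: "t \<ge> tstar + T" for B tstar t
  proof -
    define r where "r = (t - tstar) / T"
    have r1: "r \<ge> 1" unfolding r_def using t T_pos by (simp add: field_simps)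
    define k where "k = nat \<lfloor>r\<rfloor>"
    have kr: "real k \<le> r" "r < real k + 1" "k \<ge> 1" unfolding k_def using r1 by linarith+
    define s where "s = t - real k * T"
    have "real k * T \<le> r * T" using kr T_pos by (intro mult_right_mono) auto
    moreover have "r * T = t - tstar" unfolding r_def using T_pos by simp
    ultimately have s1: "s \<ge> tstar" unfolding s_def by linarith
    have kT: "real k * T \<ge> 0" using T_pos by simp
    have eq: "S t = S (real k * T) \<circ> S s"
      using Sadd[OF kT, of s] s1 B(2) unfolding s_def by simp
    have sB: "S s ` B \<subseteq> B0" using B(3) s1 by blast
    have "kuratowski (S t ` B) = kuratowski (S (real k * T) ` (S s ` B))" by (simp only: eq image_comp)
    also have "\<dots> \<le> \<eta> ^ k * kuratowski (S s ` B)" using iter[OF sB] .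
    also have "\<dots> \<le> \<eta> ^ k * kuratowski B0"
      using kur_mono[OF sB bB0] \<eta>_range by (intro mult_left_mono) auto
    also have "\<dots> \<le> rpow \<eta> ((t - tstar - T) / T) * kuratowski B0"
    proof (rule mult_right_mono[OF _ kB0])
      have eqr: "(t - tstar - T) / T = r - 1" unfolding r_def using T_pos by (simp add: field_simps)
      show "\<eta> ^ k \<le> rpow \<eta> ((t - tstar - T) / T)"
      proof (cases "\<eta> = 0")
        case True
        then show ?thesis using kr(3) unfolding rpow_def by (cases k) auto
      next
        case False
        then have ep: "\<eta> > 0" using \<eta>_range by simp
        have "\<eta> ^ k = \<eta> powr real k" using ep by (simp add: powr_realpow)
        also have "\<dots> \<le> \<eta> powr (r - 1)" using kr ep \<eta>_range by (intro powr_mono') auto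
        finally show ?thesis unfolding eqr rpow_def using ep by auto
      qed
    qed
    finally show ?thesis .
  qed
  have part2: "\<forall>B tstar. bounded B \<longrightarrow> tstar \<ge> 0 \<longrightarrow> (\<forall>t\<ge>tstar. S t ` B \<subseteq> B0) \<longrightarrow>
            (\<forall>t\<ge>tstar + T. kuratowski (S t ` B) \<le> rpow \<eta> ((t - tstar - T) / T) * kuratowski B0)"
    using main by blast
  define \<eta>' where "\<eta>' = max \<eta> (1/2)"
  have e': "0 < \<eta>'" "\<eta>' < 1" "\<eta> \<le> \<eta>'" unfolding \<eta>'_def using \<eta>_range by auto
  define \<beta> where "\<beta> = - ln \<eta>' / T"
  have \<beta>: "\<beta> > 0" proof -
    have "ln \<eta>' < 0" using e' by simp
    then show ?thesis unfolding \<beta>_def using T_pos by (simp add: divide_neg_pos)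
  qed
  define C where "C = kuratowski B0 / \<eta>' + 1"
  have Cp: "C > 0" unfolding C_def using kB0 e' by (simp add: add_nonneg_pos)
  have decay: "kuratowski (S t ` B0) \<le> C * exp (- \<beta> * t)" if t: "t \<ge> T" for t
  proof -
    have "\<forall>t\<ge>0. S t ` B0 \<subseteq> B0" using inv by blast
    then have "kuratowski (S t ` B0) \<le> rpow \<eta> ((t - 0 - T) / T) * kuratowski B0"
      using main[OF bB0 order_refl] t by simp
    also have "rpow \<eta> ((t - 0 - T) / T) \<le> \<eta>' powr ((t - T) / T)"
    proof -
      have x0: "(t - T) / T \<ge> 0" using t T_pos by simp
      show ?thesis
      proof (cases "(t - T) / T = 0")
        case True then show ?thesis unfolding rpow_def diff_zero True using e' by simp
      next
        case False
        then show ?thesis unfolding rpow_def using e' \<eta>_range x0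
          by (cases "\<eta> = 0") (auto intro: powr_mono2)
      qed
    qed
    then have "rpow \<eta> ((t - 0 - T) / T) * kuratowski B0 \<le> \<eta>' powr ((t - T) / T) * kuratowski B0"
      using kB0 by (intro mult_right_mono) auto
    also have "\<eta>' powr ((t - T) / T) = exp (- \<beta> * t) / \<eta>'"
    proof -
      have "\<eta>' powr ((t - T) / T) = exp (ln \<eta>' * ((t - T) / T))" using e' by (simp add: powr_def)
      also have "ln \<eta>' * ((t - T) / T) = - \<beta> * t - ln \<eta>'"
        unfolding \<beta>_def using T_pos by (simp add: field_simps)
      also have "exp (- \<beta> * t - ln \<eta>') = exp (- \<beta> * t) / \<eta>'" using e' by (simp add: exp_diff)
      finally show ?thesis .
    qed
    also have "exp (- \<beta> * t) / \<eta>' * kuratowski B0 \<le> C * exp (- \<beta> * t)"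
    proof -
      have "exp (- \<beta> * t) / \<eta>' * kuratowski B0 = (kuratowski B0 / \<eta>') * exp (- \<beta> * t)" by simp
      also have "\<dots> \<le> C * exp (- \<beta> * t)" unfolding C_def by (intro mult_right_mono) auto
      finally show ?thesis .
    qed
    finally show ?thesis .
  qed
  have "exp_decaying S B0"
    unfolding exp_decaying_def using diss B0_abs B0_inv T_pos Cp \<beta> decay by blast
  then show ?thesis using part2 by blast
qed

end
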